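(* Let $z$ be a positive integer and let $C$ be a quasi-cyclic LDPC code with circulant matrices of size $z$ whose base matrix is the $8\times 24$ matrix $H_{b(2/3B)}$ below. Then there is no quasi-cyclic LDPC code $D$ with circulant matrices of size $z$ such that (i) the parity-check matrices $H_C$ and $H_D$ have the same row-weight distribution, (ii) every column of $H_D$ has Hamming weight at least $2$, and (iii) $D^{\perp}\subset C$. The rows of $H_{b(2/3B)}$ are: 101010101010101011000000, 010101010101010101100000, 101010101010101000110000, 010101010101010100011000, 101010101010101000001100, 010101010101010100000110, 101010101010101010000011, 010101010101010110000001.
   Context: All codes are binary linear codes over $\mathbb{F}_2$; $D^{\perp}=\{d' : d\,d'^T=0\ \forall d\in D\}$. For a positive integer $z$, $I_z(1)$ is the $z\times z$ circulant permutation matrix of one circular right shift and $I_z(b)=I_z(1)^b$. A quasi-cyclic LDPC code with circulant matrices of size $z$ is given by a $J\times L$ model matrix with entries in $\{0,\dots,z-1\}\cup\{\infty\}$; its parity-check matrix $H$ is obtained by replacing each finite entry $p$ by $I_z(p)$ and each $\infty$ by the $z\times z$ zero matrix, and the code is $\{x\in\mathbb{F}_2^{zL}:Hx^T=0\}$. Its base matrix is the binary $J\times L$ matrix with $1$ exactly where the model entry is finite. The row-weight distribution of a binary matrix is the multiset of Hamming weights of its rows (for each $w$, the number of rows of weight $w$). The matrix $H_{b(2/3B)}$ is the base matrix of the rate-$2/3$B LDPC codes of the IEEE802.16e standard. *)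

theory Defs
  imports Main "HOL-Library.Z2" "HOL-Library.Multiset"
begin

(* Vectors / matrices over F_2 = bit.  A vector of length n is a function nat => bit
   that vanishes outside {0..<n}; a matrix is a function nat => nat => bit together
   with explicit dimensions. *)

definition vec_space :: "nat \<Rightarrow> (nat \<Rightarrow> bit) set" where
  "vec_space n = {x. \<forall>k\<ge>n. x k = 0}"

(* circulant permutation matrix I_z(b) = I_z(1)^b, I_z(1) = one circular right shift:
   entry (i,j) is 1 iff j = (i + b) mod z *)
definition circ :: "nat \<Rightarrow> nat \<Rightarrow> nat \<Rightarrow> nat \<Rightarrow> bit" where
  "circ z b i j = (if j = (i + b) mod z then 1 else 0)"

(* a J x L model matrix: None = infinity, Some p with p < z *)
definition model_matrix :: "nat \<Rightarrow> nat \<Rightarrow> nat \<Rightarrow> (nat \<Rightarrow> nat \<Rightarrow> nat option) \<Rightarrow> bool" where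
  "model_matrix J L z M \<longleftrightarrow> (\<forall>a<J. \<forall>c<L. \<forall>p. M a c = Some p \<longrightarrow> p < z)"

definition pcm :: "nat \<Rightarrow> (nat \<Rightarrow> nat \<Rightarrow> nat option) \<Rightarrow> nat \<Rightarrow> nat \<Rightarrow> bit" where
  "pcm z M r s = (case M (r div z) (s div z) of
                    None \<Rightarrow> 0
                  | Some p \<Rightarrow> circ z p (r mod z) (s mod z))"

definition qc_code :: "nat \<Rightarrow> nat \<Rightarrow> nat \<Rightarrow> (nat \<Rightarrow> nat \<Rightarrow> nat option) \<Rightarrow> (nat \<Rightarrow> bit) set" where
  "qc_code J L z M = {x \<in> vec_space (z * L).
      \<forall>r<J * z. (\<Sum>s<L * z. pcm z M r s * x s) = 0}"

definition dual_code :: "nat \<Rightarrow> (nat \<Rightarrow> bit) set \<Rightarrow> (nat \<Rightarrow> bit) set" where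
  "dual_code n D = {d' \<in> vec_space n. \<forall>d\<in>D. (\<Sum>k<n. d k * d' k) = 0}"

definition base_matrix :: "(nat \<Rightarrow> nat \<Rightarrow> nat option) \<Rightarrow> nat \<Rightarrow> nat \<Rightarrow> bool" where
  "base_matrix M a c \<longleftrightarrow> M a c \<noteq> None"

definition row_weight_distr :: "nat \<Rightarrow> nat \<Rightarrow> (nat \<Rightarrow> nat \<Rightarrow> bit) \<Rightarrow> nat multiset" where
  "row_weight_distr m n H = image_mset (\<lambda>r. card {s. s < n \<and> H r s \<noteq> 0}) (mset_set {..<m})"

definition col_weight :: "nat \<Rightarrow> (nat \<Rightarrow> nat \<Rightarrow> bit) \<Rightarrow> nat \<Rightarrow> nat" where
  "col_weight m H s = card {r. r < m \<and> H r s \<noteq> 0}"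

(* H_{b(2/3B)} of IEEE 802.16e *)
definition Hb_rows :: "string list" where
  "Hb_rows = [
    ''101010101010101011000000'',
    ''010101010101010101100000'',
    ''101010101010101000110000'',
    ''010101010101010100011000'',
    ''101010101010101000001100'',
    ''010101010101010100000110'',
    ''101010101010101010000011'',
    ''010101010101010110000001'']"

definition Hb23B :: "nat \<Rightarrow> nat \<Rightarrow> bool" where
  "Hb23B a c \<longleftrightarrow> (Hb_rows ! a) ! c = CHR ''1''"

end

theory Submission imports Defs "HOL-Number_Theory.Cong" begin

lemma block_sum: "(\<Sum>s<n*k. g s) = (\<Sum>m<n. \<Sum>i<k. g (m*k+i))" for g :: "nat \<Rightarrow> 'a::comm_monoid_add"
proof -
  have "(\<Sum>s<n*k. g s) = (\<Sum>m<n. sum g {m*k..<m*k+k})" by (rule sum.nat_group[symmetric])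
  also have "\<dots> = (\<Sum>m<n. \<Sum>i<k. g (m*k+i))"
  proof (rule sum.cong[OF refl])
    fix m
    show "sum g {m*k..<m*k+k} = (\<Sum>i<k. g (m*k+i))"
    proof -
      have "sum g {m*k..<m*k+k} = sum g {0+m*k..<k+m*k}" by (simp add: add.commute)
      also have "\<dots> = (\<Sum>i\<in>{0..<k}. g (i+m*k))" by (rule sum.shift_bounds_nat_ivl)
      finally show ?thesis by (simp add: atLeast0LessThan add.commute)
    qed
  qed
  finally show ?thesis .
qed

lemma row_sum: "i < z \<Longrightarrow> (\<Sum>k<z. circ z p i k) = (1::bit)"
  unfolding circ_def by (simp add: sum.delta)

lemma modc: "(x + q) mod (z::nat) = (y + q) mod z \<Longrightarrow> x mod z = y mod z"
  using cong_add_rcancel_nat[of x q y z] by (simp add: cong_def)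

lemma col_sum: assumes "k < z" shows "(\<Sum>j<z. circ z q j k) = (1::bit)"
proof -
  let ?f = "\<lambda>j. (j + q) mod z"
  have inj: "inj_on ?f {..<z}"
  proof
    fix x y assume "x \<in> {..<z}" "y \<in> {..<z}" "?f x = ?f y"
    then have "x mod z = y mod z" using modc by blast
    then show "x = y" using \<open>x \<in> {..<z}\<close> \<open>y \<in> {..<z}\<close> by simp
  qed
  have img: "?f ` {..<z} = {..<z}"
  proof -
    have "?f ` {..<z} \<subseteq> {..<z}" using assms by auto
    moreover have "card (?f ` {..<z}) = card {..<z}" using card_image[OF inj] by simp
    ultimately show ?thesis by (simp add: card_subset_eq)
  qed
  have "(\<Sum>j<z. circ z q j k) = (\<Sum>j<z. (\<lambda>t. if k = t then 1 else 0) (?f j))"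
    unfolding circ_def by simp
  also have "\<dots> = (\<Sum>t\<in>?f ` {..<z}. if k = t then 1 else 0)"
    using sum.reindex[OF inj, of "\<lambda>t. if k = t then (1::bit) else 0"] by simp
  also have "\<dots> = 1" using img assms by (simp add: sum.delta)
  finally show ?thesis .
qed

lemma colsums: "c < 24 \<Longrightarrow> (\<Sum>b<8. if Hb23B b c then 1 else 0) = (if c = 16 then 1 else (0::bit))"
  unfolding Hb23B_def Hb_rows_def
  by (simp add: lessThan_nat_numeral less_Suc_eq numeral_eq_Suc) (elim disjE; simp)

theorem mainTheorem3:
  fixes z :: nat and MC :: "nat \<Rightarrow> nat \<Rightarrow> nat option"
  assumes "z > 0"
    and "model_matrix 8 24 z MC"
    and "\<forall>a<8. \<forall>c<24. base_matrix MC a c = Hb23B a c"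
  shows "\<not> (\<exists>J MD. model_matrix J 24 z MD
              \<and> row_weight_distr (J * z) (24 * z) (pcm z MD)
                  = row_weight_distr (8 * z) (24 * z) (pcm z MC)
              \<and> (\<forall>s<24 * z. col_weight (J * z) (pcm z MD) s \<ge> 2)
              \<and> dual_code (24 * z) (qc_code J 24 z MD) \<subseteq> qc_code 8 24 z MC)"
proof
  assume "\<exists>J MD. model_matrix J 24 z MD
              \<and> row_weight_distr (J * z) (24 * z) (pcm z MD)
                  = row_weight_distr (8 * z) (24 * z) (pcm z MC)
              \<and> (\<forall>s<24 * z. col_weight (J * z) (pcm z MD) s \<ge> 2)
              \<and> dual_code (24 * z) (qc_code J 24 z MD) \<subseteq> qc_code 8 24 z MC"
  then obtain J MD where cw: "\<forall>s<24 * z. col_weight (J * z) (pcm z MD) s \<ge> 2"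
    and sub: "dual_code (24 * z) (qc_code J 24 z MD) \<subseteq> qc_code 8 24 z MC" by blast
  have z: "z > 0" by (rule assms(1))
  have none: "MD a 16 = None" if a: "a < J" for a
  proof (rule ccontr)
    assume nn: "MD a 16 \<noteq> None"
    define h where "h s = (if s < 24*z then pcm z MD (a*z) s else 0)" for s
    have r0: "a*z < J*z" using a z by simp
    have "h \<in> dual_code (24 * z) (qc_code J 24 z MD)"
      unfolding dual_code_def
    proof (intro CollectI conjI ballI)
      show "h \<in> vec_space (24*z)" by (simp add: vec_space_def h_def)
      fix d assume "d \<in> qc_code J 24 z MD"
      then have "(\<Sum>s<24 * z. pcm z MD (a*z) s * d s) = 0"
        using r0 unfolding qc_code_def by blast
      moreover have "(\<Sum>k<24 * z. d k * h k) = (\<Sum>s<24 * z. pcm z MD (a*z) s * d s)"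
        by (intro sum.cong) (auto simp: h_def mult.commute)
      ultimately show "(\<Sum>k<24 * z. d k * h k) = 0" by simp
    qed
    with sub have hC: "h \<in> qc_code 8 24 z MC" by blast
    define \<alpha> where "\<alpha> c = (if MD a c = None then 0 else (1::bit))" for c
    define \<beta> where "\<beta> b c = (if Hb23B b c then 1 else (0::bit))" for b c
    have hblock: "(\<Sum>k<z. h (c*z+k)) = \<alpha> c" if c: "c < 24" for c
    proof -
      have "c*z + k < 24*z" if "k < z" for k
      proof -
        have "c*z + k < c*z + z" using that by simp
        also have "\<dots> = (c+1)*z" by simp
        also have "\<dots> \<le> 24*z" using c by (intro mult_right_mono) auto
        finally show ?thesis .
      qed
      then have "(\<Sum>k<z. h (c*z+k)) = (\<Sum>k<z. pcm z MD (a*z) (c*z+k))"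
        by (intro sum.cong) (auto simp: h_def)
      also have "\<dots> = (\<Sum>k<z. case MD a c of None \<Rightarrow> 0 | Some p \<Rightarrow> circ z p 0 k)"
      proof (intro sum.cong refl)
        fix k assume "k \<in> {..<z}"
        then have k: "k < z" by simp
        have e1: "(a*z) mod z = 0" by simp
        have e2: "(c*z+k) mod z = k" using k by simp
        have e3: "(a*z) div z = a" using z by simp
        have e4: "(c*z+k) div z = c" using k z by simp
        show "pcm z MD (a*z) (c*z+k) = (case MD a c of None \<Rightarrow> 0 | Some p \<Rightarrow> circ z p 0 k)"
          unfolding pcm_def e1 e2 e3 e4 ..
      qed
      also have "\<dots> = \<alpha> c"
        using z by (cases "MD a c") (auto simp: \<alpha>_def row_sum)
      finally show ?thesis .
    qed
    have eqb: "(\<Sum>c<24. \<beta> b c * \<alpha> c) = 0" if b: "b < 8" for b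
    proof -
      have rows: "(\<Sum>s<24 * z. pcm z MC (b*z+j) s * h s) = 0" if "j < z" for j
      proof -
        have "b*z + j < b*z + z" using that by simp
        also have "\<dots> = (b+1)*z" by simp
        also have "\<dots> \<le> 8*z" using b by (intro mult_right_mono) auto
        finally show ?thesis using hC unfolding qc_code_def by simp
      qed
      have colC: "(\<Sum>j<z. pcm z MC (b*z+j) s) = \<beta> b (s div z)" if s: "s < 24*z" for s
      proof -
        have sd: "s div z < 24" using s z by (simp add: div_less_iff_less_mult)
        have "(\<Sum>j<z. pcm z MC (b*z+j) s) = (\<Sum>j<z. case MC b (s div z) of None \<Rightarrow> 0 | Some q \<Rightarrow> circ z q j (s mod z))"
        proof (intro sum.cong refl)
          fix j assume "j \<in> {..<z}"
          then have j: "j < z" by simp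
          have e1: "(b*z+j) mod z = j" using j by simp
          have e2: "(b*z+j) div z = b" using j z by simp
          show "pcm z MC (b*z+j) s = (case MC b (s div z) of None \<Rightarrow> 0 | Some q \<Rightarrow> circ z q j (s mod z))"
            unfolding pcm_def e1 e2 ..
        qed
        also have "\<dots> = (if MC b (s div z) = None then 0 else 1)"
          using z by (cases "MC b (s div z)") (auto simp: col_sum)
        also have "\<dots> = \<beta> b (s div z)"
        proof -
          have "base_matrix MC b (s div z) = Hb23B b (s div z)" using assms(3) b sd by blast
          then show ?thesis by (auto simp: \<beta>_def base_matrix_def)
        qed
        finally show ?thesis .
      qed
      have "0 = (\<Sum>j<z. \<Sum>s<24 * z. pcm z MC (b*z+j) s * h s)"
        using rows by simp
      also have "\<dots> = (\<Sum>s<24 * z. (\<Sum>j<z. pcm z MC (b*z+j) s) * h s)"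
        by (simp only: sum_distrib_right) (rule sum.swap)
      also have "\<dots> = (\<Sum>s<24 * z. \<beta> b (s div z) * h s)"
        using colC by (intro sum.cong) auto
      also have "\<dots> = (\<Sum>c<24. \<Sum>k<z. \<beta> b ((c*z+k) div z) * h (c*z+k))"
        by (rule block_sum)
      also have "\<dots> = (\<Sum>c<24. \<beta> b c * (\<Sum>k<z. h (c*z+k)))"
      proof (rule sum.cong[OF refl])
        fix c
        have "(\<Sum>k<z. \<beta> b ((c*z+k) div z) * h (c*z+k)) = (\<Sum>k<z. \<beta> b c * h (c*z+k))"
        proof (rule sum.cong[OF refl])
          fix k assume "k \<in> {..<z}"
          then have "(c*z+k) div z = c" using z by simp
          then show "\<beta> b ((c*z+k) div z) * h (c*z+k) = \<beta> b c * h (c*z+k)" by simp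
        qed
        also have "\<dots> = \<beta> b c * (\<Sum>k<z. h (c*z+k))" by (simp only: sum_distrib_left)
        finally show "(\<Sum>k<z. \<beta> b ((c*z+k) div z) * h (c*z+k)) = \<beta> b c * (\<Sum>k<z. h (c*z+k))" .
      qed
      also have "\<dots> = (\<Sum>c<24. \<beta> b c * \<alpha> c)"
        using hblock by (intro sum.cong) auto
      finally show ?thesis by simp
    qed
    have "0 = (\<Sum>b<8. \<Sum>c<24. \<beta> b c * \<alpha> c)" using eqb by simp
    also have "\<dots> = (\<Sum>c<24. (\<Sum>b<8. \<beta> b c) * \<alpha> c)"
      by (simp only: sum_distrib_right) (rule sum.swap)
    also have "\<dots> = (\<Sum>c<24. (if c = 16 then 1 else 0) * \<alpha> c)"
      by (intro sum.cong) (auto simp: \<beta>_def colsums)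
    also have "\<dots> = (\<Sum>c<24. if c = 16 then \<alpha> c else 0)"
      by (rule sum.cong) auto
    also have "\<dots> = (if (16::nat) \<in> {..<24} then \<alpha> 16 else 0)"
      by (rule sum.delta) simp
    also have "\<dots> = \<alpha> 16" by simp
    finally have "\<alpha> 16 = 0" by simp
    with nn show False unfolding \<alpha>_def by (simp split: if_splits)
  qed
  have s: "16*z < 24*z" using z by simp
  have "{r. r < J*z \<and> pcm z MD r (16*z) \<noteq> 0} = {}"
  proof -
    have "pcm z MD r (16*z) = 0" if "r < J*z" for r
    proof -
      have "r div z < J" using that z by (simp add: div_less_iff_less_mult)
      then show ?thesis using none z by (simp add: pcm_def)
    qed
    then show ?thesis by auto
  qed
  then have "col_weight (J * z) (pcm z MD) (16*z) = 0" by (simp add: col_weight_def)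
  with cw s show False by fastforce
qed

end
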